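(* Let $m,j,k$ be positive integers. Suppose that the outcome class of $G_{m,j}$ is $H$ and that the outcome class of $G_{m,k}$ is $H$ or $2$. Then there exists $N_0$ such that for all integers $N\ge N_0$, the outcome class of $G_{m,N\gcd(j,k)}$ is $H$.
   Context: Domineering is a two-player game played on a rectangular grid of unit squares. The players alternate placing dominoes, each covering two adjacent unoccupied squares; the player Vertical must place dominoes vertically (covering two squares in the same column), and the player Horizontal must place them horizontally (covering two squares in the same row). A player with no legal move on her turn loses. $G_{m,n}$ denotes the empty board with vertical dimension $m$ (number of rows) and horizontal dimension $n$ (number of columns). Every position has one of four outcome classes under optimal play: $V$ (Vertical wins whoever moves first), $H$ (Horizontal wins whoever moves first), $1$ (the player who moves first wins), $2$ (the player who moves second wins). *)

theory Defs
  imports Main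
begin

text \<open>Cells are (row, column); row is the vertical coordinate. A position is the
set of unoccupied cells.\<close>
type_synonym cell = "nat \<times> nat"

definition board :: "nat \<Rightarrow> nat \<Rightarrow> cell set" where
  "board m n = {0..<m} \<times> {0..<n}"

text \<open>Winning with a move budget (fuel). A move removes two cells, so with fuel
at least the number of free cells the budget never runs out; hence
V_first (card B) B holds iff Vertical, moving first on B, wins.\<close>
fun V_wins_first :: "nat \<Rightarrow> cell set \<Rightarrow> bool"
and H_wins_first :: "nat \<Rightarrow> cell set \<Rightarrow> bool" where
  "V_wins_first 0 B = False"
| "V_wins_first (Suc n) B =
     (\<exists>r c. (r, c) \<in> B \<and> (Suc r, c) \<in> B \<and>
        \<not> H_wins_first n (B - {(r, c), (Suc r, c)}))"
| "H_wins_first 0 B = False"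
| "H_wins_first (Suc n) B =
     (\<exists>r c. (r, c) \<in> B \<and> (r, Suc c) \<in> B \<and>
        \<not> V_wins_first n (B - {(r, c), (r, Suc c)}))"

definition V_first :: "cell set \<Rightarrow> bool" where
  "V_first B = V_wins_first (card B) B"

definition H_first :: "cell set \<Rightarrow> bool" where
  "H_first B = H_wins_first (card B) B"

datatype outcome = OV | OH | O1 | O2

definition outcome_class :: "cell set \<Rightarrow> outcome" where
  "outcome_class B =
     (if V_first B \<and> \<not> H_first B then OV
      else if H_first B \<and> \<not> V_first B then OH
      else if V_first B \<and> H_first B then O1
      else O2)"

end

theory Submission
  imports Defs
begin

lemma stab_step:
  "\<forall>B. finite B \<and> card B \<le> n \<longrightarrow>
     V_wins_first (Suc n) B = V_wins_first n B \<and> H_wins_first (Suc n) B = H_wins_first n B"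
proof (induction n)
  case 0
  then show ?case by auto
next
  case (Suc n)
  show ?case
  proof (intro allI impI)
    fix B :: "cell set" assume B: "finite B \<and> card B \<le> Suc n"
    have cV: "card (B - {(r, c), (Suc r, c)}) \<le> n" if "(r,c) \<in> B" "(Suc r, c) \<in> B" for r c
      using B that by (auto simp: card_Diff_subset)
    have cH: "card (B - {(r, c), (r, Suc c)}) \<le> n" if "(r,c) \<in> B" "(r, Suc c) \<in> B" for r c
      using B that by (auto simp: card_Diff_subset)
    show "V_wins_first (Suc (Suc n)) B = V_wins_first (Suc n) B \<and>
          H_wins_first (Suc (Suc n)) B = H_wins_first (Suc n) B"
    proof -
    have fV: "finite (B - {(r, c), (Suc r, c)})" for r c using B by simp
    have fH: "finite (B - {(r, c), (r, Suc c)})" for r c using B by simp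
    have 1: "V_wins_first (Suc (Suc n)) B = V_wins_first (Suc n) B"
      unfolding V_wins_first.simps
      using Suc.IH cV fV by metis
    have 2: "H_wins_first (Suc (Suc n)) B = H_wins_first (Suc n) B"
      unfolding H_wins_first.simps
      using Suc.IH cH fH by metis
    show ?thesis using 1 2 by blast
    qed
  qed
qed

lemma stab:
  assumes "finite B" "card B \<le> n"
  shows "V_wins_first n B = V_first B \<and> H_wins_first n B = H_first B"
  using assms(2)
proof (induction n rule: dec_induct)
  case base
  then show ?case by (simp add: V_first_def H_first_def)
next
  case (step n)
  then show ?case using stab_step assms(1) by auto
qed

lemma V_unfold:
  assumes "finite B"
  shows "V_first B \<longleftrightarrow> (\<exists>r c. (r, c) \<in> B \<and> (Suc r, c) \<in> B \<and>
            \<not> H_first (B - {(r, c), (Suc r, c)}))"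
proof (cases "card B")
  case 0
  then have "B = {}" using assms by auto
  then show ?thesis by (simp add: V_first_def)
next
  case (Suc n)
  have c: "card (B - {(r, c), (Suc r, c)}) \<le> n" if "(r,c) \<in> B" "(Suc r, c) \<in> B" for r c
    using Suc assms that by (auto simp: card_Diff_subset)
  have "V_first B = V_wins_first (Suc n) B" using Suc by (simp add: V_first_def)
  also have "\<dots> \<longleftrightarrow> (\<exists>r c. (r, c) \<in> B \<and> (Suc r, c) \<in> B \<and>
            \<not> H_first (B - {(r, c), (Suc r, c)}))"
  proof -
    have e: "H_wins_first n (B - {(r, c), (Suc r, c)}) = H_first (B - {(r, c), (Suc r, c)})"
      if "(r,c) \<in> B" "(Suc r, c) \<in> B" for r c
      using stab[of "B - {(r, c), (Suc r, c)}" n] c[OF that] assms by auto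
    show ?thesis using e by auto
  qed
  finally show ?thesis .
qed

lemma H_unfold:
  assumes "finite B"
  shows "H_first B \<longleftrightarrow> (\<exists>r c. (r, c) \<in> B \<and> (r, Suc c) \<in> B \<and>
            \<not> V_first (B - {(r, c), (r, Suc c)}))"
proof (cases "card B")
  case 0
  then have "B = {}" using assms by auto
  then show ?thesis by (simp add: H_first_def)
next
  case (Suc n)
  have c: "card (B - {(r, c), (r, Suc c)}) \<le> n" if "(r,c) \<in> B" "(r, Suc c) \<in> B" for r c
    using Suc assms that by (auto simp: card_Diff_subset)
  have "H_first B = H_wins_first (Suc n) B" using Suc by (simp add: H_first_def)
  also have "\<dots> \<longleftrightarrow> (\<exists>r c. (r, c) \<in> B \<and> (r, Suc c) \<in> B \<and>
            \<not> V_first (B - {(r, c), (r, Suc c)}))"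
  proof -
    have e: "V_wins_first n (B - {(r, c), (r, Suc c)}) = V_first (B - {(r, c), (r, Suc c)})"
      if "(r,c) \<in> B" "(r, Suc c) \<in> B" for r c
      using stab[of "B - {(r, c), (r, Suc c)}" n] c[OF that] assms by auto
    show ?thesis using e by auto
  qed
  finally show ?thesis .
qed

definition sep :: "cell set \<Rightarrow> cell set \<Rightarrow> bool" where
  "sep A B \<longleftrightarrow> (\<forall>p\<in>A. \<forall>q\<in>B. snd p \<noteq> snd q)"

lemma sum_lose_aux:
  "\<forall>A B. finite A \<and> finite B \<and> card A + card B = s \<and> sep A B \<and> \<not> V_first A \<and> \<not> V_first B
     \<longrightarrow> \<not> V_first (A \<union> B)"
proof (induction s rule: less_induct)
  case (less s)
  show ?case
  proof (intro allI impI)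
    fix A B assume H: "finite A \<and> finite B \<and> card A + card B = s \<and> sep A B \<and> \<not> V_first A \<and> \<not> V_first B"
    have fA: "finite A" and fB: "finite B" and cs: "card A + card B = s" and sp: "sep A B"
      and vA: "\<not> V_first A" and vB: "\<not> V_first B" using H by auto
    have IH: "\<not> V_first (A' \<union> B')" if "finite A'" "finite B'" "card A' + card B' < s"
      "sep A' B'" "\<not> V_first A'" "\<not> V_first B'" for A' B'
      using less that by blast
    have sp2: "snd p \<noteq> snd q" if "p \<in> A" "q \<in> B" for p q using sp that unfolding sep_def by blast
    show "\<not> V_first (A \<union> B)"
    proof
      assume "V_first (A \<union> B)"
      then obtain r c where m: "(r,c) \<in> A \<union> B" "(Suc r, c) \<in> A \<union> B"
        and nh: "\<not> H_first (A \<union> B - {(r, c), (Suc r, c)})"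
        using V_unfold[of "A \<union> B"] fA fB by blast
      have disj: "A \<inter> B = {}" using sp2 by blast
      show False
      proof (cases "(r,c) \<in> A")
        case True
        then have m2: "(Suc r, c) \<in> A" using m sp2[of "(r,c)" "(Suc r, c)"] by auto
        have "H_first (A - {(r, c), (Suc r, c)})"
          using V_unfold[of A] fA vA True m2 by blast
        then obtain r' c' where e: "(r', c') \<in> A - {(r, c), (Suc r, c)}"
          "(r', Suc c') \<in> A - {(r, c), (Suc r, c)}"
          and nv: "\<not> V_first (A - {(r, c), (Suc r, c)} - {(r', c'), (r', Suc c')})"
          using H_unfold[of "A - {(r, c), (Suc r, c)}"] fA by blast
        let ?A = "A - {(r, c), (Suc r, c)} - {(r', c'), (r', Suc c')}"
        have eq: "A \<union> B - {(r, c), (Suc r, c)} - {(r', c'), (r', Suc c')} = ?A \<union> B"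
          using disj True m2 e by blast
        have "?A \<subset> A" using e by blast
        then have cl: "card ?A < card A" using fA by (simp add: psubset_card_mono)
        have "sep ?A B" using sp unfolding sep_def by blast
        then have nv2: "\<not> V_first (?A \<union> B)"
          using IH[of ?A B] fA fB cs cl nv vB by simp
        moreover have "(r', c') \<in> A \<union> B - {(r, c), (Suc r, c)}"
          "(r', Suc c') \<in> A \<union> B - {(r, c), (Suc r, c)}" using e by auto
        ultimately have "H_first (A \<union> B - {(r, c), (Suc r, c)})"
          using H_unfold[of "A \<union> B - {(r, c), (Suc r, c)}"] fA fB eq nv2 by (metis finite_Diff finite_UnI)
        then show False using nh by simp
      next
        case False
        then have m1: "(r,c) \<in> B" using m by auto
        then have m2: "(Suc r, c) \<in> B" using m sp2[of "(Suc r,c)" "(r, c)"] by auto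
        have "H_first (B - {(r, c), (Suc r, c)})"
          using V_unfold[of B] fB vB m1 m2 by blast
        then obtain r' c' where e: "(r', c') \<in> B - {(r, c), (Suc r, c)}"
          "(r', Suc c') \<in> B - {(r, c), (Suc r, c)}"
          and nv: "\<not> V_first (B - {(r, c), (Suc r, c)} - {(r', c'), (r', Suc c')})"
          using H_unfold[of "B - {(r, c), (Suc r, c)}"] fB by blast
        let ?B = "B - {(r, c), (Suc r, c)} - {(r', c'), (r', Suc c')}"
        have eq: "A \<union> B - {(r, c), (Suc r, c)} - {(r', c'), (r', Suc c')} = A \<union> ?B"
          using disj m1 m2 e by blast
        have "?B \<subset> B" using e by blast
        then have cl: "card ?B < card B" using fB by (simp add: psubset_card_mono)
        have "sep A ?B" using sp unfolding sep_def by blast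
        then have nv2: "\<not> V_first (A \<union> ?B)"
          using IH[of A ?B] fA fB cs cl nv vA by simp
        moreover have "(r', c') \<in> A \<union> B - {(r, c), (Suc r, c)}"
          "(r', Suc c') \<in> A \<union> B - {(r, c), (Suc r, c)}" using e by auto
        ultimately have "H_first (A \<union> B - {(r, c), (Suc r, c)})"
          using H_unfold[of "A \<union> B - {(r, c), (Suc r, c)}"] fA fB eq nv2 by (metis finite_Diff finite_UnI)
        then show False using nh by simp
      qed
    qed
  qed
qed

lemma sum_lose:
  "finite A \<Longrightarrow> finite B \<Longrightarrow> sep A B \<Longrightarrow> \<not> V_first A \<Longrightarrow> \<not> V_first B \<Longrightarrow> \<not> V_first (A \<union> B)"
  using sum_lose_aux by blast

lemma sum_win:
  assumes "finite A" "finite B" "sep A B" "H_first A" "\<not> V_first B"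
  shows "H_first (A \<union> B)"
proof -
  obtain r c where e: "(r, c) \<in> A" "(r, Suc c) \<in> A"
    and nv: "\<not> V_first (A - {(r, c), (r, Suc c)})"
    using H_unfold[of A] assms(1,4) by blast
  have disj: "A \<inter> B = {}" using assms(3) unfolding sep_def by blast
  have eq: "A \<union> B - {(r, c), (r, Suc c)} = (A - {(r, c), (r, Suc c)}) \<union> B"
    using disj e by blast
  have "sep (A - {(r, c), (r, Suc c)}) B" using assms(3) unfolding sep_def by blast
  then have "\<not> V_first ((A - {(r, c), (r, Suc c)}) \<union> B)"
    using sum_lose[of "A - {(r, c), (r, Suc c)}" B] assms nv by simp
  moreover have "(r, c) \<in> A \<union> B" "(r, Suc c) \<in> A \<union> B" using e by auto
  ultimately show ?thesis using H_unfold[of "A \<union> B"] assms(1,2) eq by (metis finite_UnI)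
qed


definition shift :: "nat \<Rightarrow> cell set \<Rightarrow> cell set" where
  "shift s B = (\<lambda>(r, c). (r, c + s)) ` B"

lemma shift_mem: "(r, c) \<in> shift s B \<longleftrightarrow> s \<le> c \<and> (r, c - s) \<in> B"
  unfolding shift_def by force

lemma shift_inj: "inj (\<lambda>(r::nat, c::nat). (r, c + s))"
  by (auto simp: inj_def)

lemma shift_diff: "shift s B - {(a, b + s), (a', b' + s)} = shift s (B - {(a, b), (a', b')})"
proof -
  have "shift s (B - {(a, b), (a', b')}) = shift s B - shift s {(a, b), (a', b')}"
    unfolding shift_def using shift_inj by (simp add: image_set_diff)
  then show ?thesis by (simp add: shift_def)
qed

lemma shift_wins:
  "V_wins_first n (shift s B) = V_wins_first n B \<and> H_wins_first n (shift s B) = H_wins_first n B"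
proof (induction n arbitrary: B)
  case 0
  then show ?case by simp
next
  case (Suc n)
  have V: "V_wins_first (Suc n) (shift s B) = V_wins_first (Suc n) B"
  proof
    assume "V_wins_first (Suc n) (shift s B)"
    then obtain r c where m: "(r, c) \<in> shift s B" "(Suc r, c) \<in> shift s B"
      and h: "\<not> H_wins_first n (shift s B - {(r, c), (Suc r, c)})" by auto
    obtain c' where c': "c = c' + s" using m shift_mem by (metis le_add_diff_inverse2)
    have "shift s B - {(r, c), (Suc r, c)} = shift s (B - {(r, c'), (Suc r, c')})"
      using shift_diff c' by simp
    then show "V_wins_first (Suc n) B" using m h c' Suc.IH shift_mem by auto
  next
    assume "V_wins_first (Suc n) B"
    then obtain r c where m: "(r, c) \<in> B" "(Suc r, c) \<in> B"
      and h: "\<not> H_wins_first n (B - {(r, c), (Suc r, c)})" by auto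
    have "(r, c + s) \<in> shift s B" "(Suc r, c + s) \<in> shift s B" using m shift_mem by auto
    moreover have "\<not> H_wins_first n (shift s B - {(r, c + s), (Suc r, c + s)})"
      using h Suc.IH shift_diff by simp
    ultimately show "V_wins_first (Suc n) (shift s B)" by auto
  qed
  have H: "H_wins_first (Suc n) (shift s B) = H_wins_first (Suc n) B"
  proof
    assume "H_wins_first (Suc n) (shift s B)"
    then obtain r c where m: "(r, c) \<in> shift s B" "(r, Suc c) \<in> shift s B"
      and h: "\<not> V_wins_first n (shift s B - {(r, c), (r, Suc c)})" by auto
    obtain c' where c': "c = c' + s" using m shift_mem by (metis le_add_diff_inverse2)
    have "shift s B - {(r, c), (r, Suc c)} = shift s (B - {(r, c'), (r, Suc c')})"
      using shift_diff[of s B r c' r "Suc c'"] c' by simp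
    then show "H_wins_first (Suc n) B" using m h c' Suc.IH shift_mem by auto
  next
    assume "H_wins_first (Suc n) B"
    then obtain r c where m: "(r, c) \<in> B" "(r, Suc c) \<in> B"
      and h: "\<not> V_wins_first n (B - {(r, c), (r, Suc c)})" by auto
    have "(r, c + s) \<in> shift s B" "(r, Suc (c + s)) \<in> shift s B" using m shift_mem by auto
    moreover have "\<not> V_wins_first n (shift s B - {(r, c + s), (r, Suc c + s)})"
      using h Suc.IH shift_diff[of s B r c r "Suc c"] by simp
    ultimately show "H_wins_first (Suc n) (shift s B)" by auto
  qed
  show ?case using V H by simp
qed

lemma shift_card: "card (shift s B) = card B"
  unfolding shift_def using card_image[OF inj_on_subset[OF shift_inj subset_UNIV]] by blast

lemma shift_first: "V_first (shift s B) = V_first B" "H_first (shift s B) = H_first B"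
  unfolding V_first_def H_first_def shift_card using shift_wins by auto

lemma board_split: "board m (a + b) = board m a \<union> shift a (board m b)"
  by (auto simp: board_def shift_mem)

lemma board_sep: "sep (board m a) (shift a (board m b))"
  unfolding sep_def by (auto simp: board_def shift_mem)

lemma board_fin: "finite (board m n)" "finite (shift a (board m n))"
  by (auto simp: board_def shift_def)

definition L :: "nat \<Rightarrow> nat \<Rightarrow> bool" where "L m n \<longleftrightarrow> \<not> V_first (board m n)"

lemma L_add: "L m a \<Longrightarrow> L m b \<Longrightarrow> L m (a + b)"
  unfolding L_def board_split
  using sum_lose[OF board_fin board_sep] shift_first by simp

lemma L0: "L m 0"
  unfolding L_def by (simp add: board_def V_first_def)

lemma W_add: "H_first (board m a) \<Longrightarrow> L m b \<Longrightarrow> H_first (board m (a + b))"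
  unfolding L_def board_split
  using sum_win[OF board_fin board_sep] shift_first by simp

lemma L_mult: "L m a \<Longrightarrow> L m (c * a)"
  by (induction c) (auto simp: L0 L_add)

lemma large:
  fixes j k :: nat
  assumes "j > 0" "k > 0" "L m j" "L m k"
  shows "\<exists>M0. \<forall>M\<ge>M0. L m (M * gcd j k)"
proof -
  define g where "g = gcd j k"
  obtain x y where xy: "j * x = k * y + g" using bezout_nat[of j k] assms unfolding g_def by auto
  define k' where "k' = k div g"
  have gpos: "g > 0" using assms unfolding g_def by simp
  have kk: "k = k' * g" unfolding k'_def g_def by simp
  have k'pos: "k' > 0" using kk assms by (metis gr0I mult_eq_0_iff)
  show ?thesis
  proof (intro exI allI impI)
    fix M assume M: "M \<ge> y * k' * k'"
    define t where "t = M div k'"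
    define r where "r = M mod k'"
    have Mtr: "M = t * k' + r" unfolding t_def r_def by simp
    have rl: "r < k'" unfolding r_def using k'pos by simp
    have "y * k' * k' div k' \<le> t" unfolding t_def using M div_le_mono by blast
    then have ty: "y * k' \<le> t" using k'pos by simp
    have ry: "r * y \<le> t" using rl ty
      by (metis dual_order.trans less_or_eq_imp_le mult.commute mult_le_mono1)
    have "M * g + r * y * k = r * x * j + t * k"
    proof -
      have "M * g = t * k + r * g" using Mtr kk by (simp add: algebra_simps)
      moreover have "r * (j * x) = r * (k * y + g)" using xy by simp
      ultimately show ?thesis by (simp add: algebra_simps)
    qed
    then have "M * g = r * x * j + (t - r * y) * k"
      using ry by (simp add: diff_mult_distrib)
    moreover have "L m (r * x * j + (t - r * y) * k)"
      using L_add L_mult assms by blast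
    ultimately show "L m (M * gcd j k)" unfolding g_def by simp
  qed
qed

theorem proposition3p2:
  fixes m j k :: nat
  assumes "m > 0" and "j > 0" and "k > 0"
    and "outcome_class (board m j) = OH"
    and "outcome_class (board m k) \<in> {OH, O2}"
  shows "\<exists>N0. \<forall>N \<ge> N0. outcome_class (board m (N * gcd j k)) = OH"
proof -
  have Hj: "H_first (board m j)" and Lj: "L m j"
    using assms(4) unfolding outcome_class_def L_def by (auto split: if_splits)
  have Lk: "L m k"
    using assms(5) unfolding outcome_class_def L_def by (auto split: if_splits)
  obtain M0 where M0: "\<forall>M\<ge>M0. L m (M * gcd j k)" using large assms(2,3) Lj Lk by blast
  define j' where "j' = j div gcd j k"
  have jj: "j = j' * gcd j k" unfolding j'_def by simp
  show ?thesis
  proof (intro exI allI impI)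
    fix N assume N: "N \<ge> M0 + j'"
    have "j' * gcd j k \<le> N * gcd j k" using N mult_le_mono1 by simp
    moreover have "(N - j') * gcd j k = N * gcd j k - j' * gcd j k" by (simp add: diff_mult_distrib)
    ultimately have "N * gcd j k = j + (N - j') * gcd j k" using jj by simp
    moreover have "L m ((N - j') * gcd j k)" using M0 N by auto
    ultimately have "H_first (board m (N * gcd j k))" "L m (N * gcd j k)"
      using W_add[OF Hj] L_add[OF Lj] by auto
    then show "outcome_class (board m (N * gcd j k)) = OH"
      unfolding outcome_class_def L_def by simp
  qed
qed

end
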